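(* Let $A$ be an associative (not necessarily unital) algebra over a field $F$, let $q\in F$ with $q\ne 1$, and let $\sigma\in S_n$ satisfy $\sigma(1)\neq 1$ and $\sigma(n)\neq n$. If $A$ satisfies the identity $x_1\cdots x_n=q\,x_{\sigma(1)}\cdots x_{\sigma(n)}$, then $A$ is eventually commutative, i.e. there is some $k$ such that $A$ satisfies $x_1\cdots x_k=x_{\tau(1)}\cdots x_{\tau(k)}$ for all $\tau\in S_k$.
   Context: An identity is satisfied by $A$ if it holds upon substituting arbitrary elements of $A$ for the variables. *)

theory Defs
  imports "HOL-Combinatorics.Permutations"
begin

definition algebra_over :: "('f::field \<Rightarrow> 'a::ring \<Rightarrow> 'a) \<Rightarrow> bool" where
  "algebra_over smult \<longleftrightarrow>
     (\<forall>a b x. smult (a + b) x = smult a x + smult b x) \<and>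
     (\<forall>a x y. smult a (x + y) = smult a x + smult a y) \<and>
     (\<forall>a b x. smult (a * b) x = smult a (smult b x)) \<and>
     (\<forall>x. smult 1 x = x) \<and>
     (\<forall>a x y. smult a (x * y) = smult a x * y) \<and>
     (\<forall>a x y. smult a (x * y) = x * smult a y)"

text \<open>Ordered product x_{i1} * ... * x_{ik} of a nonempty word of indices
  (the empty word is only a filler case and is never used).\<close>
fun wprod :: "(nat \<Rightarrow> 'a::semigroup_mult) \<Rightarrow> nat list \<Rightarrow> 'a" where
  "wprod x [] = undefined"
| "wprod x [i] = x i"
| "wprod x (i # j # is) = x i * wprod x (j # is)"

end

theory Submission
  imports Defs
begin

fun prodl :: "'a::semigroup_mult list \<Rightarrow> 'a" where
  "prodl [] = undefined"
| "prodl [a] = a"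
| "prodl (a # b # l) = a * prodl (b # l)"

lemma wprod_prodl: "wprod x l = prodl (map x l)"
  by (induction x l rule: wprod.induct) auto

lemma prodl_Cons: "xs \<noteq> [] \<Longrightarrow> prodl (a # xs) = a * prodl xs"
  by (cases xs) auto

lemma prodl_append: "xs \<noteq> [] \<Longrightarrow> ys \<noteq> [] \<Longrightarrow> prodl (xs @ ys) = prodl xs * prodl ys"
  by (induction xs rule: prodl.induct) (auto simp: prodl_Cons mult.assoc)

lemma prodl_block: 
  assumes "ys \<noteq> []" shows "prodl (xs @ prodl ys # zs) = prodl (xs @ ys @ zs)"
proof -
  have 1: "prodl (prodl ys # zs) = prodl (ys @ zs)"
    using assms by (cases "zs = []") (auto simp: prodl_Cons prodl_append)
  show ?thesis
  proof (cases "xs = []")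
    case True then show ?thesis using 1 by simp
  next
    case False then show ?thesis using 1 assms
      by (metis Nil_is_append_conv list.distinct(1) prodl_append)
  qed
qed

definition sw :: "nat \<Rightarrow> nat \<Rightarrow> 'b list \<Rightarrow> 'b list" where
  "sw p r ws = ws[p := ws!r, r := ws!p]"

lemma sw_blocks: "sw (length P) (length P + length M + 1) (P @ b # M @ c # S) = P @ c # M @ b # S"
  by (simp add: sw_def list_update_append nth_append)

lemma length_sw[simp]: "length (sw p r ws) = length ws"
  by (simp add: sw_def)

lemma nth_sw: "p < length ws \<Longrightarrow> r < length ws \<Longrightarrow>
   sw p r ws ! i = (if i = r then ws!p else if i = p then ws!r else ws!i)"
  by (simp add: sw_def nth_list_update)

lemma sw_comm: "p \<noteq> r \<Longrightarrow> sw p r ws = sw r p ws"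
  by (simp add: sw_def list_update_swap)

lemma sw_conj:
  assumes "p \<noteq> r" "p \<noteq> z" "r \<noteq> z" "p < length ws" "r < length ws" "z < length ws"
  shows "sw p z (sw r z (sw p z ws)) = sw p r ws"
proof (rule nth_equalityI)
  show "length (sw p z (sw r z (sw p z ws))) = length (sw p r ws)" by simp
  fix i assume "i < length (sw p z (sw r z (sw p z ws)))"
  show "sw p z (sw r z (sw p z ws)) ! i = sw p r ws ! i"
    using assms by (simp add: nth_sw)
qed

lemma decomp:
  assumes "p < r" "r < length ws"
  shows "\<exists>P b M c S. ws = P @ b # M @ c # S \<and> length P = p \<and> length M = r - p - 1"
proof -
  have 1: "ws = take r ws @ ws!r # drop (Suc r) ws" using assms by (intro id_take_nth_drop) simp
  have 2: "take r ws = take p (take r ws) @ (take r ws)!p # drop (Suc p) (take r ws)"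
    using assms by (intro id_take_nth_drop) simp
  have 3: "take p (take r ws) = take p ws" using assms by (simp add: min_def)
  have 4: "(take r ws)!p = ws!p" using assms by simp
  have 5: "ws = (take p ws @ ws!p # drop (Suc p) (take r ws)) @ ws!r # drop (Suc r) ws"
    using 1 arg_cong[OF 2[unfolded 3 4], of "\<lambda>t. t @ ws!r # drop (Suc r) ws"] by (rule trans)
  have "ws = take p ws @ ws!p # drop (Suc p) (take r ws) @ ws!r # drop (Suc r) ws"
    using 5[unfolded append_assoc append_Cons] .
  moreover have "length (take p ws) = p" using assms by simp
  moreover have "length (drop (Suc p) (take r ws)) = r - p - 1" using assms by simp
  ultimately show ?thesis by (intro exI conjI)
qed

definition good :: "'a::semigroup_mult itself \<Rightarrow> nat \<Rightarrow> nat \<Rightarrow> nat \<Rightarrow> bool" where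
  "good T L p r \<longleftrightarrow> (\<forall>ws::'a list. length ws = L \<longrightarrow> prodl ws = prodl (sw p r ws))"

lemma good_sym: "p \<noteq> r \<Longrightarrow> good T L p r \<Longrightarrow> good T L r p"
  unfolding good_def
proof (intro allI impI)
  fix ws :: "'a list"
  assume a: "p \<noteq> r" "\<forall>ws::'a list. length ws = L \<longrightarrow> prodl ws = prodl (sw p r ws)" "length ws = L"
  have "prodl ws = prodl (sw p r ws)" using a(2,3) by blast
  also have "sw p r ws = sw r p ws" by (rule sw_comm[OF a(1)])
  finally show "prodl ws = prodl (sw r p ws)" .
qed

lemma good_trans:
  assumes "p \<noteq> r" "p \<noteq> z" "r \<noteq> z" "p < L" "r < L" "z < L" "good T L p z" "good T L r z"
  shows "good T L p r"
  unfolding good_def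
proof (intro allI impI)
  fix ws :: "'a list" assume l: "length ws = L"
  have l2: "length (sw p z ws) = L" "length (sw r z (sw p z ws)) = L" using l by simp_all
  have "prodl ws = prodl (sw p z ws)" using assms(7) l unfolding good_def by blast
  also have "\<dots> = prodl (sw r z (sw p z ws))" using assms(8) l2 unfolding good_def by blast
  also have "\<dots> = prodl (sw p z (sw r z (sw p z ws)))" using assms(7) l2 unfolding good_def by blast
  also have "\<dots> = prodl (sw p r ws)" using assms(1-6) l by (simp add: sw_conj)
  finally show "prodl ws = prodl (sw p r ws)" .
qed



lemma good_direct:
  fixes T :: "'a::semigroup_mult itself"
  assumes blk: "\<And>P b M c S. length P + length M + length S + 2 = L \<Longrightarrow> length M \<ge> n \<Longrightarrow>
        length P \<ge> n \<or> length S \<ge> n \<Longrightarrow>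
        prodl (P @ b # M @ (c::'a) # S) = prodl (P @ c # M @ b # S)"
    and "p < r" "r < L" "r - p - 1 \<ge> n" "p \<ge> n \<or> L - 1 - r \<ge> n"
  shows "good T L p r"
  unfolding good_def
proof (intro allI impI)
  fix ws :: "'a list" assume l: "length ws = L"
  obtain P b M c S where ws: "ws = P @ b # M @ c # S" and lp: "length P = p" and lm: "length M = r - p - 1"
    using decomp[of p r ws] assms l by auto
  have ls: "length S = L - 1 - r" using l ws lp lm assms by auto
  have r: "r = length P + length M + 1" using lp lm assms by auto
  have "prodl ws = prodl (P @ c # M @ b # S)" unfolding ws
    using blk[of P M S b c] assms lp lm ls l ws by auto
  also have "\<dots> = prodl (sw p r ws)" using sw_blocks[of P M b c S] ws lp r by simp
  finally show "prodl ws = prodl (sw p r ws)" .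
qed

lemma good_all:
  fixes T :: "'a::semigroup_mult itself"
  assumes blk: "\<And>P b M c S. length P + length M + length S + 2 = L \<Longrightarrow> length M \<ge> n \<Longrightarrow>
        length P \<ge> n \<or> length S \<ge> n \<Longrightarrow>
        prodl (P @ b # M @ (c::'a) # S) = prodl (P @ c # M @ b # S)"
    and L: "L \<ge> 4*n+4"
  shows "p < r \<Longrightarrow> r < L \<Longrightarrow> good T L p r"
proof -
  have far: "good T L p r" if "p < r" "r < L" "r - p > n" for p r
  proof (cases "p \<ge> n \<or> L - 1 - r \<ge> n")
    case True then show ?thesis using good_direct[OF blk] that by auto
  next
    case False
    define z where "z = 2*n+1"
    have a: "good T L p z" by (rule good_direct[OF blk]) (use False that L in \<open>auto simp: z_def\<close>)
    have b: "good T L z r" by (rule good_direct[OF blk]) (use False that L in \<open>auto simp: z_def\<close>)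
    show ?thesis using good_trans[OF _ _ _ _ _ _ a good_sym[OF _ b]] False that L unfolding z_def
      by auto
  qed
  assume pr: "p < r" "r < L"
  show "good T L p r"
  proof (cases "r - p > n")
    case True then show ?thesis using far pr by auto
  next
    case nf: False
    show ?thesis
    proof (cases "p > n")
      case True
      have a: "good T L p 0" using far[of 0 p] good_sym[of 0 p] True pr by auto
      have b: "good T L r 0" using far[of 0 r] good_sym[of 0 r] True pr by auto
      show ?thesis using good_trans[OF _ _ _ _ _ _ a b] True pr by auto
    next
      case False
      have a: "good T L p (L-1)" using far[of p "L-1"] False nf pr L by auto
      have b: "good T L r (L-1)" using far[of r "L-1"] False nf pr L by auto
      show ?thesis using good_trans[OF _ _ _ _ _ _ a b] False nf pr L by auto
    qed
  qed
qed

lemma perm_from_good: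
  fixes T :: "'a::semigroup_mult itself"
  assumes g: "\<And>p r. p < r \<Longrightarrow> r < L \<Longrightarrow> good T L p r"
  shows "length (pre @ ws) = L \<Longrightarrow> mset ws = mset ws' \<Longrightarrow> prodl (pre @ ws) = prodl (pre @ (ws'::'a list))"
proof (induction ws' arbitrary: pre ws)
  case Nil then show ?case by simp
next
  case (Cons c t)
  then have "c \<in> set ws" by (metis list.set_intros(1) set_mset_mset)
  then obtain A B where ws: "ws = A @ c # B" by (meson split_list)
  show ?case
  proof (cases "A = []")
    case True
    have "mset B = mset t" using Cons.prems ws True by simp
    then have "prodl ((pre @ [c]) @ B) = prodl ((pre @ [c]) @ t)"
      using Cons.IH[of "pre @ [c]" B] Cons.prems ws True by simp
    then show ?thesis using ws True by simp
  next
    case False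
    then obtain a A' where Cons2: "A = a # A'" by (meson neq_Nil_conv)
    have lL: "length (pre @ a # A' @ c # B) = L" using Cons.prems ws Cons2 by simp
    have "good T L (length pre) (length pre + length A' + 1)"
      using g[of "length pre" "length pre + length A' + 1"] lL by simp
    then have "prodl (pre @ a # A' @ c # B) = prodl (sw (length pre) (length pre + length A' + 1) (pre @ a # A' @ c # B))"
      using lL unfolding good_def by blast
    then have "prodl (pre @ ws) = prodl (sw (length pre) (length pre + length A' + 1) (pre @ a # A' @ c # B))"
      using ws Cons2 by simp
    also have "\<dots> = prodl ((pre @ [c]) @ (A' @ a # B))" using sw_blocks[of pre A' a c B] by simp
    also have "\<dots> = prodl ((pre @ [c]) @ t)"
      using Cons.IH[of "pre @ [c]" "A' @ a # B"] Cons.prems ws Cons2 by simp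
    finally show ?thesis by simp
  qed
qed




lemma D1:
  fixes y :: "'a::semigroup_mult"
  assumes R: "\<And>ws (y::'a). length ws = n \<Longrightarrow> prodl ws * y = prodl (ws[j0 := ws!j0 * y])"
    and j0: "j0 + 1 < n" and U: "length U \<ge> j0 + 1" and V: "length V \<ge> n - 1 - j0"
  shows "prodl (U @ V @ [y]) = prodl (U @ y # V)"
proof -
  define a where "a = n - 1 - j0"
  have a1: "a \<ge> 1" using j0 a_def by auto
  define ws where "ws = take j0 U @ prodl (drop j0 U) # take (a-1) V @ [prodl (drop (a-1) V)]"
  have lw: "length ws = n" using U V a1 j0 unfolding ws_def a_def by auto
  have dU: "drop j0 U \<noteq> []" using U by auto
  have dV: "drop (a-1) V \<noteq> []" using V a1 a_def by auto
  have nj: "ws ! j0 = prodl (drop j0 U)" using U unfolding ws_def by (simp add: nth_append)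
  have upd: "ws[j0 := ws!j0 * y] = take j0 U @ prodl (drop j0 U @ [y]) # take (a-1) V @ [prodl (drop (a-1) V)]"
    unfolding nj unfolding ws_def using U dU by (simp add: list_update_append prodl_append)
  have p1: "prodl ws = prodl (U @ V)"
  proof -
    have "prodl ws = prodl (take j0 U @ drop j0 U @ take (a-1) V @ [prodl (drop (a-1) V)])"
      unfolding ws_def by (rule prodl_block[OF dU])
    also have "\<dots> = prodl ((take j0 U @ drop j0 U @ take (a-1) V) @ prodl (drop (a-1) V) # [])"
      by simp
    also have "\<dots> = prodl ((take j0 U @ drop j0 U @ take (a-1) V) @ drop (a-1) V @ [])"
      by (rule prodl_block[OF dV])
    also have "\<dots> = prodl (U @ V)" by (metis append_Nil2 append_assoc append_take_drop_id)
    finally show ?thesis .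
  qed
  have p2: "prodl (ws[j0 := ws!j0 * y]) = prodl (U @ y # V)"
  proof -
    have ne: "drop j0 U @ [y] \<noteq> []" by simp
    have "prodl (ws[j0 := ws!j0 * y]) = prodl (take j0 U @ (drop j0 U @ [y]) @ take (a-1) V @ [prodl (drop (a-1) V)])"
      unfolding upd by (rule prodl_block[OF ne])
    also have "\<dots> = prodl ((take j0 U @ (drop j0 U @ [y]) @ take (a-1) V) @ prodl (drop (a-1) V) # [])"
      by simp
    also have "\<dots> = prodl ((take j0 U @ (drop j0 U @ [y]) @ take (a-1) V) @ drop (a-1) V @ [])"
      by (rule prodl_block[OF dV])
    also have "\<dots> = prodl (U @ y # V)" by (metis append_Nil2 append_assoc append_take_drop_id append_Cons append_Nil)
    finally show ?thesis .
  qed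
  have "prodl (U @ V @ [y]) = prodl (U @ V) * y"
    using prodl_append[of "U @ V" "[y]"] U j0 by (cases U) auto
  then show ?thesis using R[OF lw, of y] p1 p2 by simp
qed



lemma D2:
  fixes y :: "'a::semigroup_mult"
  assumes R: "\<And>ws (y::'a). length ws = n \<Longrightarrow> y * prodl ws = prodl (ws[i0 := y * ws!i0])"
    and i1: "1 \<le> i0" and i2: "i0 < n" and U: "length U \<ge> i0" and V: "length V \<ge> n - i0"
  shows "prodl (y # U @ V) = prodl (U @ y # V)"
proof -
  define m where "m = length V - (n - i0 - 1)"
  have m1: "m \<ge> 1" using V i2 m_def by auto
  define ws where "ws = take (i0-1) U @ prodl (drop (i0-1) U) # prodl (take m V) # drop m V"
  have lw: "length ws = n" using U V i1 i2 m1 unfolding ws_def m_def by auto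
  have dU: "drop (i0-1) U \<noteq> []" using U i1 by auto
  have tV: "take m V \<noteq> []" using V i2 m1 by auto
  define X where "X = take (i0-1) U @ [prodl (drop (i0-1) U)]"
  have wsX: "ws = X @ prodl (take m V) # drop m V" unfolding ws_def X_def by simp
  have lX: "length X = i0" unfolding X_def using U i1 by simp
  have nj: "ws ! i0 = prodl (take m V)" unfolding wsX using lX nth_append_length[of X] by simp
  have upd: "ws[i0 := y * ws!i0] = take (i0-1) U @ prodl (drop (i0-1) U) # prodl (y # take m V) # drop m V"
  proof -
    have "ws[i0 := y * ws!i0] = X @ (y * prodl (take m V)) # drop m V"
      unfolding nj unfolding wsX using lX list_update_length[of X] by simp
    also have "y * prodl (take m V) = prodl (y # take m V)" using tV by (simp add: prodl_Cons)
    finally show ?thesis unfolding X_def by simp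
  qed
  have p1: "prodl ws = prodl (U @ V)"
  proof -
    have "prodl ws = prodl (take (i0-1) U @ drop (i0-1) U @ prodl (take m V) # drop m V)"
      unfolding ws_def by (rule prodl_block[OF dU])
    also have "\<dots> = prodl ((take (i0-1) U @ drop (i0-1) U) @ prodl (take m V) # drop m V)"
      by (simp only: append_assoc)
    also have "\<dots> = prodl ((take (i0-1) U @ drop (i0-1) U) @ take m V @ drop m V)"
      by (rule prodl_block[OF tV])
    also have "\<dots> = prodl (U @ V)" by (metis append_take_drop_id)
    finally show ?thesis .
  qed
  have p2: "prodl (ws[i0 := y * ws!i0]) = prodl (U @ y # V)"
  proof -
    have ne: "y # take m V \<noteq> []" by simp
    have "prodl (ws[i0 := y * ws!i0]) = prodl (take (i0-1) U @ drop (i0-1) U @ prodl (y # take m V) # drop m V)"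
      unfolding upd by (rule prodl_block[OF dU])
    also have "\<dots> = prodl ((take (i0-1) U @ drop (i0-1) U) @ prodl (y # take m V) # drop m V)"
      by (simp only: append_assoc)
    also have "\<dots> = prodl ((take (i0-1) U @ drop (i0-1) U) @ (y # take m V) @ drop m V)"
      by (rule prodl_block[OF ne])
    also have "\<dots> = prodl (U @ y # V)" by (metis append_take_drop_id append_Cons)
    finally show ?thesis .
  qed
  have "prodl (y # U @ V) = y * prodl (U @ V)"
    using U i1 by (intro prodl_Cons) auto
  then show ?thesis using R[OF lw, of y] p1 p2 by simp
qed

lemma T1:
  fixes b c :: "'a::semigroup_mult"
  assumes R: "\<And>ws (y::'a). length ws = n \<Longrightarrow> prodl ws * y = prodl (ws[j0 := ws!j0 * y])"
    and j0: "j0 + 1 < n" and P: "length P \<ge> n" and M: "length M \<ge> n"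
  shows "prodl (P @ b # M @ c # S) = prodl (P @ c # M @ b # S)"
proof -
  have e1: "prodl (P @ (b # M) @ [c]) = prodl (P @ c # b # M)"
    by (rule D1[OF R j0]) (use P M j0 in auto)
  have e2: "prodl ((P @ [c]) @ M @ [b]) = prodl ((P @ [c]) @ b # M)"
    by (rule D1[OF R j0]) (use P M j0 in auto)
  have core: "prodl (P @ b # M @ [c]) = prodl (P @ c # M @ [b])"
    using e1 e2 by simp
  show ?thesis
  proof (cases "S = []")
    case True then show ?thesis using core by simp
  next
    case False
    have "prodl (P @ b # M @ c # S) = prodl ((P @ b # M @ [c]) @ S)" by simp
    also have "\<dots> = prodl (P @ b # M @ [c]) * prodl S" using False by (intro prodl_append) auto
    also have "\<dots> = prodl (P @ c # M @ [b]) * prodl S" using core by simp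
    also have "\<dots> = prodl ((P @ c # M @ [b]) @ S)" using False by (intro prodl_append[symmetric]) auto
    finally show ?thesis by simp
  qed
qed

lemma T2:
  fixes b c :: "'a::semigroup_mult"
  assumes R: "\<And>ws (y::'a). length ws = n \<Longrightarrow> y * prodl ws = prodl (ws[i0 := y * ws!i0])"
    and i1: "1 \<le> i0" and i2: "i0 < n" and M: "length M \<ge> n" and S: "length S \<ge> n"
  shows "prodl (P @ b # M @ c # S) = prodl (P @ c # M @ b # S)"
proof -
  have e1: "prodl (b # (M @ [c]) @ S) = prodl ((M @ [c]) @ b # S)"
    by (rule D2[OF R i1 i2]) (use M S i2 in auto)
  have e2: "prodl (c # M @ (b # S)) = prodl (M @ c # b # S)"
    by (rule D2[OF R i1 i2]) (use M S i2 in auto)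
  have core: "prodl (b # M @ c # S) = prodl (c # M @ b # S)"
    using e1 e2 by simp
  show ?thesis
  proof (cases "P = []")
    case True then show ?thesis using core by simp
  next
    case False
    have "prodl (P @ b # M @ c # S) = prodl P * prodl (b # M @ c # S)" using False by (intro prodl_append) auto
    also have "\<dots> = prodl P * prodl (c # M @ b # S)" using core by simp
    also have "\<dots> = prodl (P @ c # M @ b # S)" using False by (intro prodl_append[symmetric]) auto
    finally show ?thesis .
  qed
qed



lemma smult_cancel:
  fixes smult :: "'f::field \<Rightarrow> 'a::ring \<Rightarrow> 'a"
  assumes alg: "algebra_over smult" and q0: "q \<noteq> 0" and e: "smult q u = smult q v"
  shows "u = v"
proof -
  have ax: "\<And>a b w. smult (a * b) w = smult a (smult b w)" "\<And>w. smult 1 w = w"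
    using alg unfolding algebra_over_def by blast+
  have "\<And>w. smult (inverse q) (smult q w) = w"
    using q0 by (simp add: ax(1)[symmetric] ax(2))
  then have "smult (inverse q) (smult q u) = smult (inverse q) (smult q v) \<Longrightarrow> u = v" by simp
  then show ?thesis using e by simp
qed

lemma smult_zero:
  fixes smult :: "'f::field \<Rightarrow> 'a::ring \<Rightarrow> 'a"
  assumes alg: "algebra_over smult"
  shows "smult 0 u = 0"
proof -
  have "smult (0 + 0) u = smult 0 u + smult 0 u" using alg unfolding algebra_over_def by blast
  then show ?thesis by simp
qed

lemma R1:
  fixes smult :: "'f::field \<Rightarrow> 'a::ring \<Rightarrow> 'a"
    and q :: 'f and n :: nat and \<sigma> :: "nat \<Rightarrow> nat" and ws :: "'a list" and y :: 'a
  assumes alg: "algebra_over smult" and q0: "q \<noteq> 0"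
    and perm: "\<sigma> permutes {1..n}" and n2: "n \<ge> 2"
    and ident: "\<forall>x :: nat \<Rightarrow> 'a.
                  wprod x [1..<Suc n] = smult q (wprod x (map \<sigma> [1..<Suc n]))"
    and lw: "length ws = n"
  shows "prodl ws * y = prodl (ws[inv \<sigma> n - 1 := ws!(inv \<sigma> n - 1) * y])"
proof -
  define j where "j = inv \<sigma> n"
  have jin: "j \<in> {1..n}" unfolding j_def using permutes_in_image[OF permutes_inv[OF perm]] n2 by simp
  have sj: "\<sigma> j = n" unfolding j_def by (rule permutes_inverses(1)[OF perm])
  define x where "x k = ws ! (inv \<sigma> k - 1)" for k
  define x' where "x' = x(n := x n * y)"
  have hx: "map x (map \<sigma> [1..<Suc n]) = ws"
  proof (rule nth_equalityI)
    show "length (map x (map \<sigma> [1..<Suc n])) = length ws" using lw by simp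
    fix t assume "t < length (map x (map \<sigma> [1..<Suc n]))"
    then have t: "t < n" by (simp del: upt_Suc)
    then show "map x (map \<sigma> [1..<Suc n]) ! t = ws ! t"
      by (simp add: x_def permutes_inverses(2)[OF perm] del: upt_Suc)
  qed
  have hx': "map x' (map \<sigma> [1..<Suc n]) = ws[j-1 := ws!(j-1) * y]"
  proof (rule nth_equalityI)
    show "length (map x' (map \<sigma> [1..<Suc n])) = length (ws[j-1 := ws!(j-1) * y])" using lw by simp
    fix t assume "t < length (map x' (map \<sigma> [1..<Suc n]))"
    then have t: "t < n" by (simp del: upt_Suc)
    have iff: "\<sigma> (Suc t) = n \<longleftrightarrow> Suc t = j"
      using sj permutes_inj[OF perm] by (metis injD)
    show "map x' (map \<sigma> [1..<Suc n]) ! t = ws[j-1 := ws!(j-1) * y] ! t"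
    proof (cases "Suc t = j")
      case True
      have e: "map x' (map \<sigma> [1..<Suc n]) ! t = x' (\<sigma> (Suc t))" using t by (simp del: upt_Suc)
      have "x' (\<sigma> (Suc t)) = x n * y" using True iff by (simp add: x'_def)
      also have "\<dots> = ws!(j-1) * y" by (simp add: x_def j_def)
      finally have v: "x' (\<sigma> (Suc t)) = ws!(j-1) * y" .
      have tj: "j - Suc 0 = t" using True by simp
      show ?thesis unfolding tj using e v t lw by (simp add: tj)
    next
      case False
      then have tj: "t \<noteq> j - 1" using jin by auto
      have e: "map x' (map \<sigma> [1..<Suc n]) ! t = x' (\<sigma> (Suc t))" using t by (simp del: upt_Suc)
      have "x' (\<sigma> (Suc t)) = x (\<sigma> (Suc t))" using False iff by (simp add: x'_def)
      also have "\<dots> = ws ! t" by (simp add: x_def permutes_inverses(2)[OF perm])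
      finally show ?thesis using e tj by simp
    qed
  qed
  have split: "[1..<Suc n] = [1..<n] @ [n]" using n2 by simp
  have mx: "map x' [1..<n] = map x [1..<n]" by (simp add: x'_def)
  have ne: "map x [1..<n] \<noteq> []" using n2 by simp
  have "prodl (map x' [1..<Suc n]) = prodl (map x [1..<n] @ [x n * y])"
    unfolding split using mx by (simp add: x'_def)
  also have "\<dots> = prodl (map x [1..<n]) * (x n * y)" using ne by (simp add: prodl_append)
  also have "\<dots> = prodl (map x [1..<n] @ [x n]) * y" using ne by (simp add: prodl_append mult.assoc)
  also have "\<dots> = prodl (map x [1..<Suc n]) * y" unfolding split by simp
  finally have e1: "prodl (map x' [1..<Suc n]) = prodl (map x [1..<Suc n]) * y" .
  have i1: "prodl (map x [1..<Suc n]) = smult q (prodl ws)"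
    using ident[rule_format, of x] hx by (simp add: wprod_prodl)
  have i2: "prodl (map x' [1..<Suc n]) = smult q (prodl (ws[j-1 := ws!(j-1) * y]))"
    using ident[rule_format, of x'] hx' by (simp add: wprod_prodl)
  have ax: "\<And>a u v. smult a (u * v) = smult a u * v" using alg unfolding algebra_over_def by blast
  have "smult q (prodl ws * y) = smult q (prodl (ws[j-1 := ws!(j-1) * y]))"
    unfolding ax i1[symmetric] i2[symmetric] e1 ..
  then show ?thesis using smult_cancel[OF alg q0] unfolding j_def by blast
qed

lemma R2:
  fixes smult :: "'f::field \<Rightarrow> 'a::ring \<Rightarrow> 'a"
    and q :: 'f and n :: nat and \<sigma> :: "nat \<Rightarrow> nat" and ws :: "'a list" and y :: 'a
  assumes alg: "algebra_over smult" and q0: "q \<noteq> 0"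
    and perm: "\<sigma> permutes {1..n}" and n2: "n \<ge> 2"
    and ident: "\<forall>x :: nat \<Rightarrow> 'a.
                  wprod x [1..<Suc n] = smult q (wprod x (map \<sigma> [1..<Suc n]))"
    and lw: "length ws = n"
  shows "y * prodl ws = prodl (ws[inv \<sigma> 1 - 1 := y * ws!(inv \<sigma> 1 - 1)])"
proof -
  define j where "j = inv \<sigma> 1"
  have jin: "j \<in> {1..n}" unfolding j_def using permutes_in_image[OF permutes_inv[OF perm]] n2 by simp
  have sj: "\<sigma> j = 1" unfolding j_def by (rule permutes_inverses(1)[OF perm])
  define x where "x k = ws ! (inv \<sigma> k - 1)" for k
  define x' where "x' = x(1 := y * x 1)"
  have hx: "map x (map \<sigma> [1..<Suc n]) = ws"
  proof (rule nth_equalityI)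
    show "length (map x (map \<sigma> [1..<Suc n])) = length ws" using lw by simp
    fix t assume "t < length (map x (map \<sigma> [1..<Suc n]))"
    then have t: "t < n" by (simp del: upt_Suc)
    then show "map x (map \<sigma> [1..<Suc n]) ! t = ws ! t"
      by (simp add: x_def permutes_inverses(2)[OF perm] del: upt_Suc)
  qed
  have hx': "map x' (map \<sigma> [1..<Suc n]) = ws[j-1 := y * ws!(j-1)]"
  proof (rule nth_equalityI)
    show "length (map x' (map \<sigma> [1..<Suc n])) = length (ws[j-1 := y * ws!(j-1)])" using lw by simp
    fix t assume "t < length (map x' (map \<sigma> [1..<Suc n]))"
    then have t: "t < n" by (simp del: upt_Suc)
    have iff: "\<sigma> (Suc t) = 1 \<longleftrightarrow> Suc t = j"
      using sj permutes_inj[OF perm] by (metis injD)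
    show "map x' (map \<sigma> [1..<Suc n]) ! t = ws[j-1 := y * ws!(j-1)] ! t"
    proof (cases "Suc t = j")
      case True
      have e: "map x' (map \<sigma> [1..<Suc n]) ! t = x' (\<sigma> (Suc t))" using t by (simp del: upt_Suc)
      have "x' (\<sigma> (Suc t)) = y * x 1" using True iff by (simp add: x'_def)
      also have "\<dots> = y * ws!(j-1)" by (simp add: x_def j_def)
      finally have v: "x' (\<sigma> (Suc t)) = y * ws!(j-1)" .
      have tj: "j - Suc 0 = t" using True by simp
      show ?thesis unfolding tj using e v t lw by (simp add: tj)
    next
      case False
      then have tj: "t \<noteq> j - 1" using jin by auto
      have e: "map x' (map \<sigma> [1..<Suc n]) ! t = x' (\<sigma> (Suc t))" using t by (simp del: upt_Suc)
      have "x' (\<sigma> (Suc t)) = x (\<sigma> (Suc t))" using False iff by (simp add: x'_def)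
      also have "\<dots> = ws ! t" by (simp add: x_def permutes_inverses(2)[OF perm])
      finally show ?thesis using e tj by simp
    qed
  qed
  have split: "[1..<Suc n] = 1 # [Suc 1..<Suc n]" by (rule upt_conv_Cons) (use n2 in simp)
  have mx: "map x' [Suc 1..<Suc n] = map x [Suc 1..<Suc n]" by (simp add: x'_def)
  have ne: "map x [Suc 1..<Suc n] \<noteq> []" using n2 by simp
  have "prodl (map x' [1..<Suc n]) = prodl ((y * x 1) # map x [Suc 1..<Suc n])"
    unfolding split using mx by (simp add: x'_def)
  also have "\<dots> = y * prodl (x 1 # map x [Suc 1..<Suc n])" using ne by (simp add: prodl_Cons mult.assoc)
  also have "\<dots> = y * prodl (map x [1..<Suc n])" unfolding split by simp
  finally have e1: "prodl (map x' [1..<Suc n]) = y * prodl (map x [1..<Suc n])" .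
  have i1: "prodl (map x [1..<Suc n]) = smult q (prodl ws)"
    using ident[rule_format, of x] hx by (simp add: wprod_prodl)
  have i2: "prodl (map x' [1..<Suc n]) = smult q (prodl (ws[j-1 := y * ws!(j-1)]))"
    using ident[rule_format, of x'] hx' by (simp add: wprod_prodl)
  have ax: "\<And>a u v. smult a (u * v) = u * smult a v" using alg unfolding algebra_over_def by blast
  have "smult q (y * prodl ws) = smult q (prodl (ws[j-1 := y * ws!(j-1)]))"
    unfolding ax i1[symmetric] i2[symmetric] e1 ..
  then show ?thesis using smult_cancel[OF alg q0] unfolding j_def by blast
qed



lemma wprod_map: "wprod x (map \<tau> l) = wprod (x \<circ> \<tau>) l"
  by (simp add: wprod_prodl)

theorem lemma4p2:
  fixes smult :: "'f::field \<Rightarrow> 'a::ring \<Rightarrow> 'a"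
    and q :: 'f and n :: nat and \<sigma> :: "nat \<Rightarrow> nat"
  assumes alg: "algebra_over smult"
    and q: "q \<noteq> 1"
    and perm: "\<sigma> permutes {1..n}"
    and s1: "\<sigma> 1 \<noteq> 1" and sn: "\<sigma> n \<noteq> n"
    and ident: "\<forall>x :: nat \<Rightarrow> 'a.
                  wprod x [1..<Suc n] = smult q (wprod x (map \<sigma> [1..<Suc n]))"
  shows "\<exists>k\<ge>2. \<forall>\<tau>. \<tau> permutes {1..k} \<longrightarrow>
           (\<forall>x :: nat \<Rightarrow> 'a. wprod x [1..<Suc k] = wprod x (map \<tau> [1..<Suc k]))"
proof -
  have n1: "1 \<in> {1..n}" using permutes_not_in[OF perm, of 1] s1 by blast
  have n2: "n \<ge> 2"
  proof (rule ccontr)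
    assume "\<not> n \<ge> 2"
    then have "n = 1" using n1 by auto
    then have "\<sigma> 1 \<in> {1..1}" using permutes_in_image[OF perm, of 1] by simp
    then show False using s1 by simp
  qed
  show ?thesis
  proof (cases "q = 0")
    case True
    have z: "wprod x [1..<Suc n] = 0" for x :: "nat \<Rightarrow> 'a"
      using ident[rule_format, of x] True smult_zero[OF alg] by simp
    show ?thesis
    proof (intro exI[of _ n] conjI allI impI)
      show "2 \<le> n" by (rule n2)
      fix \<tau> :: "nat \<Rightarrow> nat" and x :: "nat \<Rightarrow> 'a"
      show "wprod x [1..<Suc n] = wprod x (map \<tau> [1..<Suc n])"
        unfolding wprod_map z ..
    qed
  next
    case q0: False
    define j0 where "j0 = inv \<sigma> n - 1"
    define i0 where "i0 = inv \<sigma> 1 - 1"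
    have jin: "inv \<sigma> n \<in> {1..n}" using permutes_in_image[OF permutes_inv[OF perm]] n2 by simp
    have iin: "inv \<sigma> 1 \<in> {1..n}" using permutes_in_image[OF permutes_inv[OF perm]] n2 by simp
    have jn: "inv \<sigma> n \<noteq> n" using sn permutes_inverses(1)[OF perm, of n] by metis
    have i1: "inv \<sigma> 1 \<noteq> 1" using s1 permutes_inverses(1)[OF perm, of 1] by metis
    have j0n: "j0 + 1 < n" using jin jn unfolding j0_def by auto
    have i0a: "1 \<le> i0" "i0 < n" using iin i1 unfolding i0_def by auto
    have RR1: "\<And>ws (y::'a). length ws = n \<Longrightarrow> prodl ws * y = prodl (ws[j0 := ws!j0 * y])"
      unfolding j0_def by (rule R1[OF alg q0 perm n2 ident])
    have RR2: "\<And>ws (y::'a). length ws = n \<Longrightarrow> y * prodl ws = prodl (ws[i0 := y * ws!i0])"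
      unfolding i0_def by (rule R2[OF alg q0 perm n2 ident])
    define L where "L = 4*n+4"
    have blk: "prodl (P @ b # M @ (c::'a) # S) = prodl (P @ c # M @ b # S)"
      if "length P + length M + length S + 2 = L" "length M \<ge> n" "length P \<ge> n \<or> length S \<ge> n"
      for P b M c S
      using that T1[OF RR1 j0n, of P M b c S] T2[OF RR2 i0a, of M S P b c] by blast
    have g: "good TYPE('a) L p r" if "p < r" "r < L" for p r
      using good_all[OF blk, of L] that unfolding L_def by auto
    show ?thesis
    proof (intro exI[of _ L] conjI allI impI)
      show "2 \<le> L" unfolding L_def by simp
      fix \<tau> :: "nat \<Rightarrow> nat" and x :: "nat \<Rightarrow> 'a"
      assume tau: "\<tau> permutes {1..L}"
      have d1: "distinct (map \<tau> [1..<Suc L])"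
        using permutes_inj[OF tau] by (simp add: distinct_map inj_on_subset)
      have su: "set [1..<Suc L] = {1..L}" by (simp only: set_upt atLeastLessThanSuc_atLeastAtMost)
      have st: "set (map \<tau> [1..<Suc L]) = set [1..<Suc L]"
        unfolding set_map su by (rule permutes_image[OF tau])
      have "mset (map \<tau> [1..<Suc L]) = mset [1..<Suc L]"
        using set_eq_iff_mset_eq_distinct[OF d1, of "[1..<Suc L]"] st by simp
      then have ms: "mset (map x [1..<Suc L]) = mset (map x (map \<tau> [1..<Suc L]))"
        by (metis mset_map)
      have "prodl ([] @ map x [1..<Suc L]) = prodl ([] @ map x (map \<tau> [1..<Suc L]))"
        by (rule perm_from_good[where T="TYPE('a)", OF g]) (use ms in auto)
      then show "wprod x [1..<Suc L] = wprod x (map \<tau> [1..<Suc L])"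
        by (simp add: wprod_prodl del: upt_Suc)
    qed
  qed
qed


end
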